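(* Let $A$ be an AUF algebra, $B$ a unital algebra, and $M$ an $A$-$B$ bimodule that is coherent and projective as a left $A$-module. Let $p\in B$ be an idempotent and $\psi\in\mathrm{SLF}(A)$. Let ${}^\psi\mathrm{Tr}_M:B\to\mathbb C$ be the right pseudotrace associated to $M$, and ${}^\psi\mathrm{Tr}_{Mp}:pBp\to\mathbb C$ the right pseudotrace associated to the $A$-$(pBp)$ bimodule $Mp$. Then ${}^\psi\mathrm{Tr}_{Mp}={}^\psi\mathrm{Tr}_M|_{pBp}$.
   Context: All algebras are associative $\mathbb C$-algebras, not necessarily unital. An idempotent is $e$ with $e^2=e$. An algebra $A$ is AUF if there is a family $(e_i)_{i\in\mathfrak I}$ of mutually orthogonal idempotents with $\dim e_iAe_j<\infty$ and $A=\sum_{i,j}e_iAe_j$. A left $A$-module is quasicoherent if $\xi\in A\xi$ for all $\xi$, coherent if moreover finitely generated. $\mathrm{SLF}(C)$ is the space of linear $\phi:C\to\mathbb C$ with $\phi(xy)=\phi(yx)$. $Mp=\{\xi p:\xi\in M\}$, a left $A$-submodule and direct summand of $M$, with right action of the unital algebra $pBp$. For an $A$-$B'$ bimodule $N$ ($B'$ unital) that is coherent and projective as a left $A$-module, a right coordinate system is an idempotent $e\in A$ with finitely many left $A$-module maps $\beta_j:Ae\to N$, $\check\beta^j:N\to Ae$ such that $\sum_j\beta_j\circ\check\beta^j=\mathrm{id}_N$ (one exists), and the right pseudotrace is ${}^\psi\mathrm{Tr}_N(y)=\sum_j\psi(\check\beta^j(\beta_j(e)y))$ for $y\in B'$,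 independent of the choice. *)

theory Defs
  imports Complex_Main
begin

text \<open>Complex algebras are types of class ring (not necessarily unital) together with an
explicit scalar multiplication by complex numbers.\<close>

definition alg :: "(complex \<Rightarrow> 'a::ring \<Rightarrow> 'a) \<Rightarrow> bool" where
  "alg sc \<longleftrightarrow>
     (\<forall>c x y. sc c (x + y) = sc c x + sc c y) \<and> (\<forall>c d x. sc (c + d) x = sc c x + sc d x) \<and>
     (\<forall>c d x. sc (c * d) x = sc c (sc d x)) \<and> (\<forall>x. sc 1 x = x) \<and>
     (\<forall>c x y. sc c (x * y) = sc c x * y \<and> sc c (x * y) = x * sc c y)"

definition fin_dim :: "(complex \<Rightarrow> 'v \<Rightarrow> 'v::ab_group_add) \<Rightarrow> 'v set \<Rightarrow> bool" where
  "fin_dim sc V \<longleftrightarrow> (\<exists>S. finite S \<and> S \<subseteq> V \<and> (\<forall>v\<in>V. \<exists>c. v = (\<Sum>s\<in>S. sc (c s) s)))"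

text \<open>AUF algebra: a family (here a set; repeated members of an orthogonal family of
idempotents are necessarily 0) of mutually orthogonal idempotents with finite-dimensional
corners eAf whose sum is A.\<close>
definition AUF :: "(complex \<Rightarrow> 'a::ring \<Rightarrow> 'a) \<Rightarrow> bool" where
  "AUF sc \<longleftrightarrow> alg sc \<and>
     (\<exists>E::'a set. (\<forall>e\<in>E. e * e = e) \<and> (\<forall>e\<in>E. \<forall>f\<in>E. e \<noteq> f \<longrightarrow> e * f = 0) \<and>
        (\<forall>e\<in>E. \<forall>f\<in>E. fin_dim sc {e * x * f | x. True}) \<and>
        (\<forall>x. \<exists>F y. finite F \<and> F \<subseteq> E \<times> E \<and> x = (\<Sum>(e, f)\<in>F. e * y e f * f)))"

definition SLF :: "(complex \<Rightarrow> 'a::ring \<Rightarrow> 'a) \<Rightarrow> ('a \<Rightarrow> complex) set" where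
  "SLF sc = {\<psi>. (\<forall>x y. \<psi> (x + y) = \<psi> x + \<psi> y) \<and> (\<forall>c x. \<psi> (sc c x) = c * \<psi> x) \<and>
                 (\<forall>x y. \<psi> (x * y) = \<psi> (y * x))}"

definition lmod :: "(complex \<Rightarrow> 'a::ring \<Rightarrow> 'a) \<Rightarrow> 'x set \<Rightarrow> ('x \<Rightarrow> 'x \<Rightarrow> 'x) \<Rightarrow> 'x \<Rightarrow>
    (complex \<Rightarrow> 'x \<Rightarrow> 'x) \<Rightarrow> ('a \<Rightarrow> 'x \<Rightarrow> 'x) \<Rightarrow> bool" where
  "lmod scA X add z sc act \<longleftrightarrow>
     z \<in> X \<and> (\<forall>x\<in>X. \<forall>y\<in>X. add x y \<in> X) \<and> (\<forall>c. \<forall>x\<in>X. sc c x \<in> X) \<and>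
     (\<forall>a. \<forall>x\<in>X. act a x \<in> X) \<and>
     (\<forall>x\<in>X. \<forall>y\<in>X. \<forall>w\<in>X. add (add x y) w = add x (add y w)) \<and>
     (\<forall>x\<in>X. \<forall>y\<in>X. add x y = add y x) \<and> (\<forall>x\<in>X. add z x = x) \<and>
     (\<forall>x\<in>X. \<exists>y\<in>X. add x y = z) \<and>
     (\<forall>c. \<forall>x\<in>X. \<forall>y\<in>X. sc c (add x y) = add (sc c x) (sc c y)) \<and>
     (\<forall>c d. \<forall>x\<in>X. sc (c + d) x = add (sc c x) (sc d x)) \<and>
     (\<forall>c d. \<forall>x\<in>X. sc (c * d) x = sc c (sc d x)) \<and> (\<forall>x\<in>X. sc 1 x = x) \<and>
     (\<forall>a b. \<forall>x\<in>X. act (a + b) x = add (act a x) (act b x)) \<and>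
     (\<forall>a. \<forall>x\<in>X. \<forall>y\<in>X. act a (add x y) = add (act a x) (act a y)) \<and>
     (\<forall>a b. \<forall>x\<in>X. act (a * b) x = act a (act b x)) \<and>
     (\<forall>c a. \<forall>x\<in>X. act (scA c a) x = sc c (act a x) \<and> act a (sc c x) = sc c (act a x))"

definition lhom :: "'x set \<Rightarrow> ('x \<Rightarrow> 'x \<Rightarrow> 'x) \<Rightarrow> (complex \<Rightarrow> 'x \<Rightarrow> 'x) \<Rightarrow> ('a \<Rightarrow> 'x \<Rightarrow> 'x) \<Rightarrow>
    'y set \<Rightarrow> ('y \<Rightarrow> 'y \<Rightarrow> 'y) \<Rightarrow> (complex \<Rightarrow> 'y \<Rightarrow> 'y) \<Rightarrow> ('a \<Rightarrow> 'y \<Rightarrow> 'y) \<Rightarrow>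
    ('x \<Rightarrow> 'y) \<Rightarrow> bool" where
  "lhom X addX scX actX Y addY scY actY f \<longleftrightarrow>
     f ` X \<subseteq> Y \<and> (\<forall>x\<in>X. \<forall>y\<in>X. f (addX x y) = addY (f x) (f y)) \<and>
     (\<forall>c. \<forall>x\<in>X. f (scX c x) = scY c (f x)) \<and> (\<forall>a. \<forall>x\<in>X. f (actX a x) = actY a (f x))"

text \<open>Projectivity as a left A-module (lifting property), where the test modules X, Y
range over all left A-modules whose carriers live in the type 'x (given by the TYPE
argument).\<close>
definition lproj :: "(complex \<Rightarrow> 'a::ring \<Rightarrow> 'a) \<Rightarrow> 'm set \<Rightarrow> ('m \<Rightarrow> 'm \<Rightarrow> 'm) \<Rightarrow> 'm \<Rightarrow>
    (complex \<Rightarrow> 'm \<Rightarrow> 'm) \<Rightarrow> ('a \<Rightarrow> 'm \<Rightarrow> 'm) \<Rightarrow> 'x itself \<Rightarrow> bool" where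
  "lproj scA N addN zN scN actN (T::'x itself) \<longleftrightarrow>
     (\<forall>(X::'x set) addX zX scX actX (Y::'x set) addY zY scY actY g f.
        lmod scA X addX zX scX actX \<and> lmod scA Y addY zY scY actY \<and>
        lhom X addX scX actX Y addY scY actY g \<and> g ` X = Y \<and>
        lhom N addN scN actN Y addY scY actY f \<longrightarrow>
        (\<exists>h. lhom N addN scN actN X addX scX actX h \<and> (\<forall>\<xi>\<in>N. g (h \<xi>) = f \<xi>)))"

definition gen_lmod :: "(complex \<Rightarrow> 'a::ring \<Rightarrow> 'a) \<Rightarrow> (complex \<Rightarrow> 'm::ab_group_add \<Rightarrow> 'm) \<Rightarrow>
    ('a \<Rightarrow> 'm \<Rightarrow> 'm) \<Rightarrow> 'm set \<Rightarrow> 'm set" where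
  "gen_lmod scA scM act G = \<Inter>{Y. G \<subseteq> Y \<and> lmod scA Y (+) 0 scM act}"

definition quasicoherent :: "('a \<Rightarrow> 'm \<Rightarrow> 'm) \<Rightarrow> 'm set \<Rightarrow> bool" where
  "quasicoherent act N \<longleftrightarrow> (\<forall>\<xi>\<in>N. \<exists>a. act a \<xi> = \<xi>)"

definition coherent :: "(complex \<Rightarrow> 'a::ring \<Rightarrow> 'a) \<Rightarrow> (complex \<Rightarrow> 'm::ab_group_add \<Rightarrow> 'm) \<Rightarrow>
    ('a \<Rightarrow> 'm \<Rightarrow> 'm) \<Rightarrow> 'm set \<Rightarrow> bool" where
  "coherent scA scM act N \<longleftrightarrow> lmod scA N (+) 0 scM act \<and> quasicoherent act N \<and>
     (\<exists>G. finite G \<and> G \<subseteq> N \<and> N = gen_lmod scA scM act G)"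

definition bimod :: "(complex \<Rightarrow> 'a::ring \<Rightarrow> 'a) \<Rightarrow> (complex \<Rightarrow> 'b::ring_1 \<Rightarrow> 'b) \<Rightarrow>
    (complex \<Rightarrow> 'm::ab_group_add \<Rightarrow> 'm) \<Rightarrow> ('a \<Rightarrow> 'm \<Rightarrow> 'm) \<Rightarrow> ('m \<Rightarrow> 'b \<Rightarrow> 'm) \<Rightarrow> bool" where
  "bimod scA scB scM act ract \<longleftrightarrow> lmod scA UNIV (+) 0 scM act \<and>
     (\<forall>x. ract x 1 = x) \<and> (\<forall>x b b'. ract x (b * b') = ract (ract x b) b') \<and>
     (\<forall>x y b. ract (x + y) b = ract x b + ract y b) \<and>
     (\<forall>x b b'. ract x (b + b') = ract x b + ract x b') \<and>
     (\<forall>c x b. ract (scM c x) b = scM c (ract x b) \<and> ract x (scB c b) = scM c (ract x b)) \<and>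
     (\<forall>a x b. act a (ract x b) = ract (act a x) b)"

text \<open>Right coordinate system of a left A-module N (carrier in the ambient type 'm):
an idempotent e and finitely many module maps beta_j : Ae -> N, checkbeta_j : N -> Ae
with sum_j beta_j o checkbeta_j = id_N.\<close>
definition rcoord :: "(complex \<Rightarrow> 'a::ring \<Rightarrow> 'a) \<Rightarrow> (complex \<Rightarrow> 'm::ab_group_add \<Rightarrow> 'm) \<Rightarrow>
    ('a \<Rightarrow> 'm \<Rightarrow> 'm) \<Rightarrow> 'm set \<Rightarrow> 'a \<Rightarrow> ('a \<Rightarrow> 'm) list \<Rightarrow> ('m \<Rightarrow> 'a) list \<Rightarrow> bool" where
  "rcoord scA scM act N e \<beta> \<beta>c \<longleftrightarrow> e * e = e \<and> length \<beta> = length \<beta>c \<and>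
     (\<forall>j < length \<beta>.
        lhom {a * e | a. True} (+) scA (*) N (+) scM act (\<beta> ! j) \<and>
        lhom N (+) scM act {a * e | a. True} (+) scA (*) (\<beta>c ! j)) \<and>
     (\<forall>\<xi>\<in>N. (\<Sum>j<length \<beta>. (\<beta> ! j) ((\<beta>c ! j) \<xi>)) = \<xi>)"

text \<open>Right pseudotrace (computed from some coordinate system; the paper shows it is
independent of the choice).\<close>
definition rptrace :: "(complex \<Rightarrow> 'a::ring \<Rightarrow> 'a) \<Rightarrow> (complex \<Rightarrow> 'm::ab_group_add \<Rightarrow> 'm) \<Rightarrow>
    ('a \<Rightarrow> 'm \<Rightarrow> 'm) \<Rightarrow> ('m \<Rightarrow> 'b \<Rightarrow> 'm) \<Rightarrow> 'm set \<Rightarrow> ('a \<Rightarrow> complex) \<Rightarrow> 'b \<Rightarrow> complex" where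
  "rptrace scA scM act ract N \<psi> = (SOME T. \<exists>e \<beta> \<beta>c. rcoord scA scM act N e \<beta> \<beta>c \<and>
      T = (\<lambda>y. \<Sum>j<length \<beta>. \<psi> ((\<beta>c ! j) (ract ((\<beta> ! j) e) y))))"

end

theory Submission
  imports Defs
begin


lemma sum_closed:
  fixes N :: "'m::ab_group_add set"
  assumes "0 \<in> N" "\<forall>x\<in>N. \<forall>y\<in>N. x + y \<in> N" "\<forall>i\<in>I. t i \<in> N"
  shows "(\<Sum>i\<in>I. t i) \<in> N"
  using assms(3)
proof (induction I rule: infinite_finite_induct)
  case (infinite A) then show ?case using assms(1) by simp
next
  case empty then show ?case using assms(1) by simp
next
  case (insert x F) then show ?case using assms(2) by simp
qed

lemma sum_hom:
  fixes N :: "'m::ab_group_add set" and F :: "'m \<Rightarrow> 'n::ab_group_add"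
  assumes N0: "0 \<in> N" and Nadd: "\<forall>x\<in>N. \<forall>y\<in>N. x + y \<in> N"
    and Fadd: "\<forall>x\<in>N. \<forall>y\<in>N. F (x + y) = F x + F y" and t: "\<forall>i\<in>I. t i \<in> N"
  shows "F (\<Sum>i\<in>I. t i) = (\<Sum>i\<in>I. F (t i))"
proof -
  have F0: "F 0 = 0" using Fadd N0 by (metis add_cancel_right_right add_0)
  show ?thesis using t
  proof (induction I rule: infinite_finite_induct)
    case (infinite A) then show ?case using F0 by simp
  next
    case empty then show ?case using F0 by simp
  next
    case (insert x I)
    have s: "(\<Sum>i\<in>I. t i) \<in> N" using sum_closed[OF N0 Nadd, of I t] insert by simp
    have "F (\<Sum>i\<in>insert x I. t i) = F (t x + (\<Sum>i\<in>I. t i))" using insert by simp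
    also have "\<dots> = F (t x) + F (\<Sum>i\<in>I. t i)" using Fadd s insert by simp
    finally show ?case using insert by simp
  qed
qed

lemma indep:
  fixes scA :: "complex \<Rightarrow> 'a::ring \<Rightarrow> 'a" and scM :: "complex \<Rightarrow> 'm::ab_group_add \<Rightarrow> 'm"
  assumes c1: "rcoord scA scM act N e \<beta> \<beta>c" and c2: "rcoord scA scM act N f \<gamma> \<gamma>c"
    and psi: "\<psi> \<in> SLF scA" and N0: "0 \<in> N" and Nadd: "\<forall>x\<in>N. \<forall>y\<in>N. x + y \<in> N"
    and RN: "\<forall>\<xi>\<in>N. R \<xi> \<in> N" and Radd: "\<forall>\<xi>\<in>N. \<forall>\<eta>\<in>N. R (\<xi> + \<eta>) = R \<xi> + R \<eta>"
    and Ract: "\<forall>a. \<forall>\<xi>\<in>N. act a (R \<xi>) = R (act a \<xi>)"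
  shows "(\<Sum>j<length \<beta>. \<psi> ((\<beta>c!j) (R ((\<beta>!j) e)))) = (\<Sum>k<length \<gamma>. \<psi> ((\<gamma>c!k) (R ((\<gamma>!k) f))))"
proof -
  let ?De = "{a * e | a. True}"
  let ?Df = "{a * f | a. True}"
  from c1 have ee: "e * e = e" and hb: "\<forall>j<length \<beta>. lhom ?De (+) scA (*) N (+) scM act (\<beta>!j)"
    and hbc: "\<forall>j<length \<beta>. lhom N (+) scM act ?De (+) scA (*) (\<beta>c!j)"
    and idb: "\<forall>\<xi>\<in>N. (\<Sum>j<length \<beta>. (\<beta>!j) ((\<beta>c!j) \<xi>)) = \<xi>"
    unfolding rcoord_def by auto
  from c2 have ff: "f * f = f" and hg: "\<forall>j<length \<gamma>. lhom ?Df (+) scA (*) N (+) scM act (\<gamma>!j)"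
    and hgc: "\<forall>j<length \<gamma>. lhom N (+) scM act ?Df (+) scA (*) (\<gamma>c!j)"
    and idg: "\<forall>\<xi>\<in>N. (\<Sum>j<length \<gamma>. (\<gamma>!j) ((\<gamma>c!j) \<xi>)) = \<xi>"
    unfolding rcoord_def by auto
  have eDe: "e \<in> ?De" using ee by (metis (mono_tags, lifting) mem_Collect_eq)
  have fDf: "f \<in> ?Df" using ff by (metis (mono_tags, lifting) mem_Collect_eq)
  have bN: "\<And>j x. j < length \<beta> \<Longrightarrow> x \<in> ?De \<Longrightarrow> (\<beta>!j) x \<in> N"
    using hb unfolding lhom_def by blast
  have bact: "\<And>j a x. j < length \<beta> \<Longrightarrow> x \<in> ?De \<Longrightarrow> (\<beta>!j) (a * x) = act a ((\<beta>!j) x)"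
    using hb unfolding lhom_def by blast
  have bcD: "\<And>j \<xi>. j < length \<beta> \<Longrightarrow> \<xi> \<in> N \<Longrightarrow> (\<beta>c!j) \<xi> \<in> ?De"
    using hbc unfolding lhom_def by blast
  have bcadd: "\<And>j. j < length \<beta> \<Longrightarrow> \<forall>\<xi>\<in>N. \<forall>\<eta>\<in>N. (\<beta>c!j) (\<xi> + \<eta>) = (\<beta>c!j) \<xi> + (\<beta>c!j) \<eta>"
    using hbc unfolding lhom_def by blast
  have bcact: "\<And>j a \<xi>. j < length \<beta> \<Longrightarrow> \<xi> \<in> N \<Longrightarrow> (\<beta>c!j) (act a \<xi>) = a * (\<beta>c!j) \<xi>"
    using hbc unfolding lhom_def by blast
  have gN: "\<And>j x. j < length \<gamma> \<Longrightarrow> x \<in> ?Df \<Longrightarrow> (\<gamma>!j) x \<in> N"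
    using hg unfolding lhom_def by blast
  have gact: "\<And>j a x. j < length \<gamma> \<Longrightarrow> x \<in> ?Df \<Longrightarrow> (\<gamma>!j) (a * x) = act a ((\<gamma>!j) x)"
    using hg unfolding lhom_def by blast
  have gcD: "\<And>j \<xi>. j < length \<gamma> \<Longrightarrow> \<xi> \<in> N \<Longrightarrow> (\<gamma>c!j) \<xi> \<in> ?Df"
    using hgc unfolding lhom_def by blast
  have gcadd: "\<And>j. j < length \<gamma> \<Longrightarrow> \<forall>\<xi>\<in>N. \<forall>\<eta>\<in>N. (\<gamma>c!j) (\<xi> + \<eta>) = (\<gamma>c!j) \<xi> + (\<gamma>c!j) \<eta>"
    using hgc unfolding lhom_def by blast
  have gcact: "\<And>j a \<xi>. j < length \<gamma> \<Longrightarrow> \<xi> \<in> N \<Longrightarrow> (\<gamma>c!j) (act a \<xi>) = a * (\<gamma>c!j) \<xi>"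
    using hgc unfolding lhom_def by blast
  have psiadd: "\<forall>x\<in>UNIV. \<forall>y\<in>UNIV. \<psi> (x + y) = \<psi> x + \<psi> y" and psicomm: "\<And>x y. \<psi> (x * y) = \<psi> (y * x)"
    using psi unfolding SLF_def by auto
  define v where "v j k = (\<beta>c!j) ((\<gamma>!k) f)" for j k
  have key: "\<psi> ((\<beta>c!j) ((\<gamma>!k) ((\<gamma>c!k) (R ((\<beta>!j) e))))) = \<psi> ((\<gamma>c!k) (R ((\<beta>!j) (v j k))))"
    if j: "j < length \<beta>" and k: "k < length \<gamma>" for j k
  proof -
    define w where "w = R ((\<beta>!j) e)"
    have wN: "w \<in> N" using RN bN[OF j eDe] w_def by simp
    obtain a where u: "(\<gamma>c!k) w = a * f" using gcD[OF k wN] by blast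
    have gfN: "(\<gamma>!k) f \<in> N" using gN[OF k fDf] .
    have "(\<gamma>!k) f = act f ((\<gamma>!k) f)" using gact[OF k fDf, of f] ff by simp
    hence fv: "f * v j k = v j k" using bcact[OF j gfN, of f] v_def by simp
    obtain b where vb: "v j k = b * e" using bcD[OF j gfN] v_def by auto
    have "(\<beta>c!j) ((\<gamma>!k) ((\<gamma>c!k) w)) = (\<beta>c!j) (act a ((\<gamma>!k) f))" using u gact[OF k fDf] by simp
    also have "\<dots> = a * v j k" using bcact[OF j gfN] v_def by simp
    also have "\<dots> = (\<gamma>c!k) w * v j k" using u fv by (metis mult.assoc)
    finally have 1: "(\<beta>c!j) ((\<gamma>!k) ((\<gamma>c!k) w)) = (\<gamma>c!k) w * v j k" .
    have ve: "v j k * e = v j k" using vb ee by (metis mult.assoc)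
    have vDe: "v j k \<in> ?De" using vb by blast
    have "act (v j k) w = R (act (v j k) ((\<beta>!j) e))" using Ract bN[OF j eDe] w_def by simp
    also have "\<dots> = R ((\<beta>!j) (v j k))" using bact[OF j eDe, of "v j k"] ve by simp
    finally have 2: "act (v j k) w = R ((\<beta>!j) (v j k))" .
    have "v j k * (\<gamma>c!k) w = (\<gamma>c!k) (R ((\<beta>!j) (v j k)))" using gcact[OF k wN, of "v j k"] 2 by simp
    then show ?thesis using 1 psicomm w_def by metis
  qed
  have "(\<Sum>j<length \<beta>. \<psi> ((\<beta>c!j) (R ((\<beta>!j) e))))
      = (\<Sum>j<length \<beta>. \<Sum>k<length \<gamma>. \<psi> ((\<beta>c!j) ((\<gamma>!k) ((\<gamma>c!k) (R ((\<beta>!j) e))))))"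
  proof (rule sum.cong[OF refl])
    fix j assume "j \<in> {..<length \<beta>}" hence j: "j < length \<beta>" by simp
    have wN: "R ((\<beta>!j) e) \<in> N" using RN bN[OF j eDe] by simp
    have tN: "\<forall>k\<in>{..<length \<gamma>}. (\<gamma>!k) ((\<gamma>c!k) (R ((\<beta>!j) e))) \<in> N"
      using gN gcD wN by blast
    have "(\<beta>c!j) (R ((\<beta>!j) e)) = (\<beta>c!j) (\<Sum>k<length \<gamma>. (\<gamma>!k) ((\<gamma>c!k) (R ((\<beta>!j) e))))"
      using idg wN by simp
    also have "\<dots> = (\<Sum>k<length \<gamma>. (\<beta>c!j) ((\<gamma>!k) ((\<gamma>c!k) (R ((\<beta>!j) e)))))"
      using sum_hom[OF N0 Nadd bcadd[OF j] tN] .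
    finally show "\<psi> ((\<beta>c!j) (R ((\<beta>!j) e))) = (\<Sum>k<length \<gamma>. \<psi> ((\<beta>c!j) ((\<gamma>!k) ((\<gamma>c!k) (R ((\<beta>!j) e))))))"
      using sum_hom[of UNIV, OF _ _ psiadd] by simp
  qed
  also have "\<dots> = (\<Sum>j<length \<beta>. \<Sum>k<length \<gamma>. \<psi> ((\<gamma>c!k) (R ((\<beta>!j) (v j k)))))"
    using key by simp
  also have "\<dots> = (\<Sum>k<length \<gamma>. \<Sum>j<length \<beta>. \<psi> ((\<gamma>c!k) (R ((\<beta>!j) (v j k)))))"
    by (rule sum.swap)
  also have "\<dots> = (\<Sum>k<length \<gamma>. \<psi> ((\<gamma>c!k) (R ((\<gamma>!k) f))))"
  proof (rule sum.cong[OF refl])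
    fix k assume "k \<in> {..<length \<gamma>}" hence k: "k < length \<gamma>" by simp
    have gfN: "(\<gamma>!k) f \<in> N" using gN[OF k fDf] .
    have tN: "\<forall>j\<in>{..<length \<beta>}. (\<beta>!j) (v j k) \<in> N" using bN bcD gfN v_def by simp
    have tN2: "\<forall>j\<in>{..<length \<beta>}. R ((\<beta>!j) (v j k)) \<in> N" using tN RN by simp
    have "R ((\<gamma>!k) f) = R (\<Sum>j<length \<beta>. (\<beta>!j) (v j k))" using idb gfN v_def by simp
    also have "\<dots> = (\<Sum>j<length \<beta>. R ((\<beta>!j) (v j k)))" using sum_hom[OF N0 Nadd Radd tN] .
    finally have "(\<gamma>c!k) (R ((\<gamma>!k) f)) = (\<Sum>j<length \<beta>. (\<gamma>c!k) (R ((\<beta>!j) (v j k))))"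
      using sum_hom[OF N0 Nadd gcadd[OF k] tN2] by simp
    then show "(\<Sum>j<length \<beta>. \<psi> ((\<gamma>c!k) (R ((\<beta>!j) (v j k))))) = \<psi> ((\<gamma>c!k) (R ((\<gamma>!k) f)))"
      using sum_hom[of UNIV, OF _ _ psiadd, of "{..<length \<beta>}" "\<lambda>j. (\<gamma>c!k) (R ((\<beta>!j) (v j k)))"] by simp
  qed
  finally show ?thesis .
qed



lemma orth_sum:
  fixes S :: "'a::ring set"
  assumes "finite S" "\<forall>e\<in>S. e * e = e" "\<forall>e\<in>S. \<forall>f\<in>S. e \<noteq> f \<longrightarrow> e * f = 0"
  shows "\<forall>x\<in>S. (\<Sum>S) * x = x" and "(\<Sum>S) * (\<Sum>S) = (\<Sum>S)"
proof -
  show 1: "\<forall>x\<in>S. (\<Sum>S) * x = x"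
  proof
    fix x assume x: "x \<in> S"
    have "(\<Sum>S) * x = (\<Sum>s\<in>S. s * x)" by (simp add: sum_distrib_right)
    also have "\<dots> = (\<Sum>s\<in>S. if s = x then x else 0)"
      using assms x by (intro sum.cong) auto
    also have "\<dots> = x" using assms(1) x by simp
    finally show "(\<Sum>S) * x = x" .
  qed
  have "(\<Sum>S) * (\<Sum>S) = (\<Sum>x\<in>S. (\<Sum>S) * x)" by (simp add: sum_distrib_left)
  also have "\<dots> = (\<Sum>S)" using 1 by simp
  finally show "(\<Sum>S) * (\<Sum>S) = (\<Sum>S)" .
qed

lemma lhom_comp:
  assumes "lhom X aX sX acX Y aY sY acY f" "lhom Y aY sY acY Z aZ sZ acZ g"
  shows "lhom X aX sX acX Z aZ sZ acZ (g \<circ> f)"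
  using assms unfolding lhom_def by (auto simp: image_subset_iff)

lemma submod:
  fixes Y :: "'m::ab_group_add set"
  assumes "lmod sc UNIV (+) 0 s act" "0 \<in> Y" "\<forall>x\<in>Y. \<forall>y\<in>Y. x + y \<in> Y"
    "\<forall>c. \<forall>x\<in>Y. s c x \<in> Y" "\<forall>a. \<forall>x\<in>Y. act a x \<in> Y" "\<forall>x\<in>Y. \<exists>y\<in>Y. x + y = 0"
  shows "lmod sc Y (+) 0 s act"
proof -
  from assms(1) have "\<forall>c x y. s c (x + y) = s c x + s c y" "\<forall>c d x. s (c + d) x = s c x + s d x"
    "\<forall>c d x. s (c * d) x = s c (s d x)" "\<forall>x. s 1 x = x" "\<forall>a b x. act (a + b) x = act a x + act b x"
    "\<forall>a x y. act a (x + y) = act a x + act a y" "\<forall>a b x. act (a * b) x = act a (act b x)"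
    "\<forall>c a x. act (sc c a) x = s c (act a x) \<and> act a (s c x) = s c (act a x)"
    unfolding lmod_def by auto
  then show ?thesis using assms(2-) unfolding lmod_def by (auto simp: add.assoc add.commute)
qed

lemma transport:
  fixes emb :: "'m::ab_group_add \<Rightarrow> 'x"
  assumes inj: "inj emb" and lm: "lmod scA UNIV (+) 0 scM act"
  shows "lmod scA (range emb) (\<lambda>u v. emb (inv emb u + inv emb v)) (emb 0)
            (\<lambda>c u. emb (scM c (inv emb u))) (\<lambda>a u. emb (act a (inv emb u)))"
    and "lhom UNIV (+) scM act (range emb) (\<lambda>u v. emb (inv emb u + inv emb v))
            (\<lambda>c u. emb (scM c (inv emb u))) (\<lambda>a u. emb (act a (inv emb u))) emb"
proof -
  have ii: "\<And>x. inv emb (emb x) = x" using inj by (simp add: inv_f_f)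
  show "lhom UNIV (+) scM act (range emb) (\<lambda>u v. emb (inv emb u + inv emb v))
            (\<lambda>c u. emb (scM c (inv emb u))) (\<lambda>a u. emb (act a (inv emb u))) emb"
    unfolding lhom_def by (simp add: ii)
  show "lmod scA (range emb) (\<lambda>u v. emb (inv emb u + inv emb v)) (emb 0)
            (\<lambda>c u. emb (scM c (inv emb u))) (\<lambda>a u. emb (act a (inv emb u)))"
    using lm unfolding lmod_def
    apply (simp add: ii add.assoc)
    apply (intro conjI allI)
     apply (metis add.commute)
    apply (metis add.right_inverse)
    done
qed



lemma lmod_X:
  fixes scA :: "complex \<Rightarrow> 'a::ring \<Rightarrow> 'a" and G :: "'m set"
  assumes alg: "alg scA" and ee: "e * e = e"
  shows "lmod scA {x::'m\<Rightarrow>'a. (\<forall>m. x m * e = x m) \<and> (\<forall>m. m \<notin> G \<longrightarrow> x m = 0)}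
     (\<lambda>x y m. x m + y m) (\<lambda>m. 0) (\<lambda>c x m. scA c (x m)) (\<lambda>a x m. a * x m)"
proof -
  from alg have s1: "\<And>c x y. scA c (x + y) = scA c x + scA c y"
    and s2: "\<And>c d x. scA (c + d) x = scA c x + scA d x"
    and s3: "\<And>c d x. scA (c * d) x = scA c (scA d x)" and s4: "\<And>x. scA 1 x = x"
    and s5: "\<And>c x y. scA c (x * y) = scA c x * y" and s6: "\<And>c x y. scA c (x * y) = x * scA c y"
    unfolding alg_def by metis+
  have s0: "\<And>c. scA c 0 = 0" using s1[of _ 0 0] by simp
  let ?X = "{x::'m\<Rightarrow>'a. (\<forall>m. x m * e = x m) \<and> (\<forall>m. m \<notin> G \<longrightarrow> x m = 0)}"
  have neg: "\<forall>x\<in>?X. \<exists>y\<in>?X. (\<lambda>m. x m + y m) = (\<lambda>m. 0)"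
  proof
    fix x assume x: "x \<in> ?X"
    show "\<exists>y\<in>?X. (\<lambda>m. x m + y m) = (\<lambda>m. 0)"
      by (rule bexI[of _ "\<lambda>m. - x m"]) (use x in auto)
  qed
  show ?thesis unfolding lmod_def
    using neg
    by (auto simp: fun_eq_iff algebra_simps s0 s1 s2 s3 s4 s5[symmetric] s6[symmetric] ee)
qed

lemma exists_coord:
  fixes scA :: "complex \<Rightarrow> 'a::ring \<Rightarrow> 'a"
    and scM :: "complex \<Rightarrow> 'm::ab_group_add \<Rightarrow> 'm"
    and act :: "'a \<Rightarrow> 'm \<Rightarrow> 'm"
  assumes auf: "AUF scA"
    and coh: "coherent scA scM act UNIV"
    and proj: "lproj scA UNIV (+) 0 scM act TYPE('m \<Rightarrow> 'a)"
  shows "\<exists>e \<beta> \<beta>c. rcoord scA scM act UNIV e \<beta> \<beta>c"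
proof -
  have lm: "lmod scA UNIV (+) 0 scM act" using coh unfolding coherent_def by blast
  from lm have a1: "\<And>a b x. act (a + b) x = act a x + act b x"
    and a2: "\<And>a x y. act a (x + y) = act a x + act a y"
    and a3: "\<And>a b x. act (a * b) x = act a (act b x)"
    and a4: "\<And>c a x. act (scA c a) x = scM c (act a x)"
    and a5: "\<And>c a x. act a (scM c x) = scM c (act a x)"
    and m1: "\<And>c x y. scM c (x + y) = scM c x + scM c y"
    unfolding lmod_def by simp_all
  have act0: "\<And>x. act 0 x = 0" using a1[of 0 0] by simp
  have qc: "\<forall>\<xi>. \<exists>a. act a \<xi> = \<xi>" using coh unfolding coherent_def quasicoherent_def by blast
  show ?thesis
  proof (cases "\<forall>a::'a. a = 0")
    case True
    have "\<forall>\<xi>::'m. \<xi> = 0"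
    proof
      fix \<xi> :: 'm
      obtain a where a: "act a \<xi> = \<xi>" using qc by blast
      have "a = 0" using True by blast
      then show "\<xi> = 0" using a act0 by simp
    qed
    then have "rcoord scA scM act UNIV 0 [] []" unfolding rcoord_def by simp
    then show ?thesis by blast
  next
    case False
    then obtain c0 :: 'a where c0: "c0 \<noteq> 0" by blast
    from coh obtain G where Gfin: "finite G" and Ggen: "UNIV = gen_lmod scA scM act G"
      unfolding coherent_def by blast
    from auf have alg: "alg scA" unfolding AUF_def by blast
    from auf obtain E :: "'a set" where Eid: "\<forall>e\<in>E. e * e = e"
      and Eorth: "\<forall>e\<in>E. \<forall>f\<in>E. e \<noteq> f \<longrightarrow> e * f = 0"
      and Edec: "\<forall>x. \<exists>F y. finite F \<and> F \<subseteq> E \<times> E \<and> x = (\<Sum>(e, f)\<in>F. e * y e f * f)"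
      unfolding AUF_def by blast
    have "\<forall>x. \<exists>Fy. finite (fst Fy) \<and> fst Fy \<subseteq> E \<times> E \<and> x = (\<Sum>(e, f)\<in>fst Fy. e * snd Fy e f * f)"
    proof
      fix x
      from Edec obtain F y where "finite F \<and> F \<subseteq> E \<times> E \<and> x = (\<Sum>(e, f)\<in>F. e * y e f * f)" by blast
      then show "\<exists>Fy. finite (fst Fy) \<and> fst Fy \<subseteq> E \<times> E \<and> x = (\<Sum>(e, f)\<in>fst Fy. e * snd Fy e f * f)"
        by (intro exI[of _ "(F, y)"]) simp
    qed
    then obtain FYc where FYc: "\<forall>x. finite (fst (FYc x)) \<and> fst (FYc x) \<subseteq> E \<times> E \<and> x = (\<Sum>(e, f)\<in>fst (FYc x). e * snd (FYc x) e f * f)"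
      by (rule choice[THEN exE]) blast
    define FF where "FF x = fst (FYc x)" for x
    define YY where "YY x = snd (FYc x)" for x
    have FY: "\<And>x. finite (FF x) \<and> FF x \<subseteq> E \<times> E \<and> x = (\<Sum>(e, f)\<in>FF x. e * YY x e f * f)"
      using FYc unfolding FF_def YY_def by blast
    from qc obtain AA where AA: "\<forall>\<xi>. act (AA \<xi>) \<xi> = \<xi>" by (rule choice[THEN exE]) blast
    define S where "S = (\<Union>g\<in>G. fst ` FF (AA g))"
    have Sfin: "finite S" unfolding S_def using Gfin FY by auto
    have SE: "S \<subseteq> E" unfolding S_def using FY by fastforce
    define e where "e = \<Sum>S"
    have c1: "\<forall>e\<in>S. e * e = e" using Eid SE by blast
    have c2: "\<forall>e\<in>S. \<forall>f\<in>S. e \<noteq> f \<longrightarrow> e * f = 0" using Eorth SE by blast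
    have eS: "\<forall>x\<in>S. e * x = x" and ee: "e * e = e"
      using orth_sum[OF Sfin c1 c2] unfolding e_def by simp_all
    have eg: "act e g = g" if g: "g \<in> G" for g
    proof -
      have "e * AA g = (\<Sum>(e1, f1)\<in>FF (AA g). e * (e1 * YY (AA g) e1 f1 * f1))"
        proof -
        have "e * AA g = e * (\<Sum>(e1, f1)\<in>FF (AA g). e1 * YY (AA g) e1 f1 * f1)" using FY[of "AA g"] by simp
        also have "\<dots> = (\<Sum>z\<in>FF (AA g). e * (case z of (e1, f1) \<Rightarrow> e1 * YY (AA g) e1 f1 * f1))"
          by (rule sum_distrib_left)
        finally show ?thesis by (simp add: case_prod_beta')
      qed
      also have "\<dots> = (\<Sum>(e1, f1)\<in>FF (AA g). e1 * YY (AA g) e1 f1 * f1)"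
      proof (rule sum.cong[OF refl])
        fix z assume z: "z \<in> FF (AA g)"
        have "fst z \<in> S" unfolding S_def using g z by blast
        then show "(case z of (e1, f1) \<Rightarrow> e * (e1 * YY (AA g) e1 f1 * f1)) =
                   (case z of (e1, f1) \<Rightarrow> e1 * YY (AA g) e1 f1 * f1)"
          using eS by (cases z) (simp add: mult.assoc[symmetric])
      qed
      also have "\<dots> = AA g" using FY[of "AA g"] by simp
      finally have "e * AA g = AA g" .
      then show ?thesis using a3[of e "AA g" g] AA by simp
    qed
    define X where "X = {x::'m\<Rightarrow>'a. (\<forall>m. x m * e = x m) \<and> (\<forall>m. m \<notin> G \<longrightarrow> x m = 0)}"
    define addX :: "('m\<Rightarrow>'a) \<Rightarrow> ('m\<Rightarrow>'a) \<Rightarrow> ('m\<Rightarrow>'a)" where "addX = (\<lambda>x y m. x m + y m)"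
    define zX :: "'m\<Rightarrow>'a" where "zX = (\<lambda>m. 0)"
    define scX :: "complex \<Rightarrow> ('m\<Rightarrow>'a) \<Rightarrow> ('m\<Rightarrow>'a)" where "scX = (\<lambda>c x m. scA c (x m))"
    define actX :: "'a \<Rightarrow> ('m\<Rightarrow>'a) \<Rightarrow> ('m\<Rightarrow>'a)" where "actX = (\<lambda>a x m. a * x m)"
    have lmX: "lmod scA X addX zX scX actX"
      unfolding X_def addX_def zX_def scX_def actX_def by (rule lmod_X[OF alg ee])
    define \<Phi> where "\<Phi> x = (\<Sum>g\<in>G. act (x g) g)" for x :: "'m \<Rightarrow> 'a"
    have scsum: "scM c (\<Sum>g\<in>G. t g) = (\<Sum>g\<in>G. scM c (t g))" for c t
      by (rule sum_hom[of UNIV]) (simp_all add: m1)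
    have actsum: "act a (\<Sum>g\<in>G. t g) = (\<Sum>g\<in>G. act a (t g))" for a t
      by (rule sum_hom[of UNIV]) (simp_all add: a2)
    have hPhi: "lhom X addX scX actX UNIV (+) scM act \<Phi>"
      unfolding lhom_def
    proof (intro conjI ballI allI)
      show "\<Phi> ` X \<subseteq> UNIV" by simp
    next
      fix x y assume "x \<in> X" "y \<in> X"
      show "\<Phi> (addX x y) = \<Phi> x + \<Phi> y" unfolding \<Phi>_def addX_def by (simp add: a1 sum.distrib)
    next
      fix c x assume "x \<in> X"
      show "\<Phi> (scX c x) = scM c (\<Phi> x)" unfolding \<Phi>_def scX_def by (simp add: a4 scsum)
    next
      fix a x assume "x \<in> X"
      show "\<Phi> (actX a x) = act a (\<Phi> x)" unfolding \<Phi>_def actX_def by (simp add: a3 actsum)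
    qed
    have surj: "\<Phi> ` X = UNIV"
    proof -
      have lmX': "zX \<in> X" "\<forall>x\<in>X. \<forall>y\<in>X. addX x y \<in> X" "\<forall>c. \<forall>x\<in>X. scX c x \<in> X"
        "\<forall>a. \<forall>x\<in>X. actX a x \<in> X" "\<forall>x\<in>X. \<exists>y\<in>X. addX x y = zX"
        using lmX unfolding lmod_def by simp_all
      have Phi0: "\<Phi> zX = 0" unfolding \<Phi>_def zX_def by (simp add: act0)
      have hP: "\<forall>x\<in>X. \<forall>y\<in>X. \<Phi> (addX x y) = \<Phi> x + \<Phi> y" "\<forall>c. \<forall>x\<in>X. \<Phi> (scX c x) = scM c (\<Phi> x)"
        "\<forall>a. \<forall>x\<in>X. \<Phi> (actX a x) = act a (\<Phi> x)"
        using hPhi unfolding lhom_def by simp_all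
      have sub: "lmod scA (\<Phi> ` X) (+) 0 scM act"
      proof (rule submod[OF lm])
        show "0 \<in> \<Phi> ` X" using Phi0 lmX'(1) by (metis image_eqI)
        show "\<forall>x\<in>\<Phi> ` X. \<forall>y\<in>\<Phi> ` X. x + y \<in> \<Phi> ` X" proof (intro ballI)
          fix u v assume "u \<in> \<Phi> ` X" "v \<in> \<Phi> ` X"
          then obtain x y where "x \<in> X" "y \<in> X" "u = \<Phi> x" "v = \<Phi> y" by blast
          then show "u + v \<in> \<Phi> ` X" using hP(1) lmX'(2) by (intro image_eqI[of _ _ "addX x y"]) auto
        qed
        show "\<forall>c. \<forall>x\<in>\<Phi> ` X. scM c x \<in> \<Phi> ` X" proof (intro ballI allI)
          fix c u assume "u \<in> \<Phi> ` X"
          then obtain x where "x \<in> X" "u = \<Phi> x" by blast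
          then show "scM c u \<in> \<Phi> ` X" using hP(2) lmX'(3) by (intro image_eqI[of _ _ "scX c x"]) auto
        qed
        show "\<forall>a. \<forall>x\<in>\<Phi> ` X. act a x \<in> \<Phi> ` X" proof (intro ballI allI)
          fix a u assume "u \<in> \<Phi> ` X"
          then obtain x where "x \<in> X" "u = \<Phi> x" by blast
          then show "act a u \<in> \<Phi> ` X" using hP(3) lmX'(4) by (intro image_eqI[of _ _ "actX a x"]) auto
        qed
        show "\<forall>x\<in>\<Phi> ` X. \<exists>y\<in>\<Phi> ` X. x + y = 0"
        proof
          fix u assume "u \<in> \<Phi> ` X"
          then obtain x where x: "x \<in> X" "u = \<Phi> x" by blast
          then obtain y where y: "y \<in> X" "addX x y = zX" using lmX'(5) by blast
          show "\<exists>y\<in>\<Phi> ` X. u + y = 0"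
            using x y hP(1) Phi0 by (intro bexI[of _ "\<Phi> y"]) auto
        qed
      qed
      have GX: "G \<subseteq> \<Phi> ` X"
      proof
        fix g assume g: "g \<in> G"
        define x where "x = (\<lambda>m. if m = g then e else (0::'a))"
        have xX: "x \<in> X" unfolding X_def x_def using ee g by auto
        have "\<Phi> x = (\<Sum>g'\<in>G. if g' = g then act e g' else 0)"
          unfolding \<Phi>_def x_def by (intro sum.cong) (auto simp: act0)
        also have "\<dots> = g" using Gfin g eg by simp
        finally show "g \<in> \<Phi> ` X" using xX by (metis image_eqI)
      qed
      have "gen_lmod scA scM act G \<subseteq> \<Phi> ` X"
        unfolding gen_lmod_def using sub GX by (intro Inter_lower) simp
      then show ?thesis using Ggen by auto
    qed
    define emb :: "'m \<Rightarrow> ('m \<Rightarrow> 'a)" where "emb \<xi> = (\<lambda>m. if m = \<xi> then c0 else 0)" for \<xi>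
    have inj: "inj emb"
    proof (rule injI)
      fix x y assume "emb x = emb y"
      then have "emb x x = emb y x" by simp
      then show "x = y" using c0 unfolding emb_def by (auto split: if_splits)
    qed
    define Y where "Y = range emb"
    define addY where "addY = (\<lambda>u v. emb (inv emb u + inv emb v))"
    define zY where "zY = emb 0"
    define scY where "scY = (\<lambda>c u. emb (scM c (inv emb u)))"
    define actY where "actY = (\<lambda>a u. emb (act a (inv emb u)))"
    have lmY: "lmod scA Y addY zY scY actY" and hemb: "lhom UNIV (+) scM act Y addY scY actY emb"
      unfolding Y_def addY_def zY_def scY_def actY_def using transport[OF inj lm] by simp_all
    have hg: "lhom X addX scX actX Y addY scY actY (emb \<circ> \<Phi>)" by (rule lhom_comp[OF hPhi hemb])
    have gsurj: "(emb \<circ> \<Phi>) ` X = Y" unfolding Y_def using surj by (metis image_comp)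
    from proj have "\<exists>h. lhom UNIV (+) scM act X addX scX actX h \<and> (\<forall>\<xi>\<in>UNIV. (emb \<circ> \<Phi>) (h \<xi>) = emb \<xi>)"
      unfolding lproj_def using lmX lmY hg gsurj hemb by blast
    then obtain h where hh: "lhom UNIV (+) scM act X addX scX actX h" and hinv: "\<And>\<xi>. emb (\<Phi> (h \<xi>)) = emb \<xi>"
      by auto
    have Phih: "\<Phi> (h \<xi>) = \<xi>" for \<xi> using hinv[of \<xi>] inj by (simp add: inj_eq)
    have hX: "h \<xi> \<in> X" for \<xi> using hh unfolding lhom_def by auto
    have hadd: "h (\<xi> + \<eta>) = addX (h \<xi>) (h \<eta>)" for \<xi> \<eta> using hh unfolding lhom_def by auto
    have hsc: "h (scM c \<xi>) = scX c (h \<xi>)" for c \<xi> using hh unfolding lhom_def by auto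
    have hact: "h (act a \<xi>) = actX a (h \<xi>)" for a \<xi> using hh unfolding lhom_def by auto
    obtain gs where gs: "set gs = G" "distinct gs" using finite_distinct_list[OF Gfin] by blast
    define \<beta> :: "('a \<Rightarrow> 'm) list" where "\<beta> = map (\<lambda>g a. act a g) gs"
    define \<beta>c :: "('m \<Rightarrow> 'a) list" where "\<beta>c = map (\<lambda>g \<xi>. h \<xi> g) gs"
    have "rcoord scA scM act UNIV e \<beta> \<beta>c"
      unfolding rcoord_def
    proof (intro conjI allI impI ballI)
      show "e * e = e" by (rule ee)
      show "length \<beta> = length \<beta>c" unfolding \<beta>_def \<beta>c_def by simp
    next
      fix j assume j: "j < length \<beta>"
      then have j': "j < length gs" unfolding \<beta>_def by simp
      show "lhom {a * e | a. True} (+) scA (*) UNIV (+) scM act (\<beta> ! j)"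
        unfolding lhom_def \<beta>_def using j' by (simp add: a1 a3 a4)
      have im: "h \<xi> (gs ! j) \<in> {a * e | a. True}" for \<xi>
      proof -
        have "h \<xi> (gs ! j) * e = h \<xi> (gs ! j)" using hX[of \<xi>] unfolding X_def by blast
        then show ?thesis by (metis (mono_tags, lifting) mem_Collect_eq)
      qed
      show "lhom UNIV (+) scM act {a * e | a. True} (+) scA (*) (\<beta>c ! j)"
        unfolding lhom_def \<beta>c_def using j' im
        by (auto simp add: hadd hsc hact addX_def scX_def actX_def)
    next
      fix \<xi> :: 'm
      have "(\<Sum>j<length \<beta>. (\<beta> ! j) ((\<beta>c ! j) \<xi>)) = (\<Sum>j<length gs. act (h \<xi> (gs ! j)) (gs ! j))"
        unfolding \<beta>_def \<beta>c_def by simp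
      also have "\<dots> = sum_list (map (\<lambda>g. act (h \<xi> g) g) gs)"
        by (simp add: sum_list_sum_nth atLeast0LessThan)
      also have "\<dots> = (\<Sum>g\<in>G. act (h \<xi> g) g)" using gs by (simp add: sum_list_distinct_conv_sum_set)
      also have "\<dots> = \<xi>" using Phih[of \<xi>] unfolding \<Phi>_def .
      finally show "(\<Sum>j<length \<beta>. (\<beta> ! j) ((\<beta>c ! j) \<xi>)) = \<xi>" .
    qed
    then show ?thesis by blast
  qed
qed



lemma rptrace_eq:
  fixes scA :: "complex \<Rightarrow> 'a::ring \<Rightarrow> 'a" and scM :: "complex \<Rightarrow> 'm::ab_group_add \<Rightarrow> 'm"
  assumes c: "rcoord scA scM act N e \<beta> \<beta>c"
    and psi: "\<psi> \<in> SLF scA" and N0: "0 \<in> N" and Nadd: "\<forall>x\<in>N. \<forall>y\<in>N. x + y \<in> N"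
    and RN: "\<forall>\<xi>\<in>N. ract \<xi> y \<in> N" and Radd: "\<forall>\<xi>\<in>N. \<forall>\<eta>\<in>N. ract (\<xi> + \<eta>) y = ract \<xi> y + ract \<eta> y"
    and Ract: "\<forall>a. \<forall>\<xi>\<in>N. act a (ract \<xi> y) = ract (act a \<xi>) y"
  shows "rptrace scA scM act ract N \<psi> y = (\<Sum>j<length \<beta>. \<psi> ((\<beta>c!j) (ract ((\<beta>!j) e) y)))"
proof -
  let ?P = "\<lambda>T. \<exists>e \<beta> \<beta>c. rcoord scA scM act N e \<beta> \<beta>c \<and>
      T = (\<lambda>y. \<Sum>j<length \<beta>. \<psi> ((\<beta>c ! j) (ract ((\<beta> ! j) e) y)))"
  have ex0: "?P (\<lambda>y. \<Sum>j<length \<beta>. \<psi> ((\<beta>c ! j) (ract ((\<beta> ! j) e) y)))"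
    by (rule exI[of _ e], rule exI[of _ \<beta>], rule exI[of _ \<beta>c]) (simp add: c)
  have ex: "\<exists>T. ?P T"
    by (rule exI[where x="\<lambda>y. \<Sum>j<length \<beta>. \<psi> ((\<beta>c ! j) (ract ((\<beta> ! j) e) y))"]) (rule ex0)
  have "?P (SOME T. ?P T)" by (rule someI_ex[OF ex])
  then obtain e' \<beta>' \<beta>c' where c': "rcoord scA scM act N e' \<beta>' \<beta>c'"
    and T: "(SOME T. ?P T) = (\<lambda>y. \<Sum>j<length \<beta>'. \<psi> ((\<beta>c' ! j) (ract ((\<beta>' ! j) e') y)))" by blast
  have "rptrace scA scM act ract N \<psi> y = (\<Sum>j<length \<beta>'. \<psi> ((\<beta>c' ! j) (ract ((\<beta>' ! j) e') y)))"
    unfolding rptrace_def using T by simp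
  also have "\<dots> = (\<Sum>j<length \<beta>. \<psi> ((\<beta>c!j) (ract ((\<beta>!j) e) y)))"
    using indep[OF c' c psi N0 Nadd, of "\<lambda>\<xi>. ract \<xi> y"] RN Radd Ract by simp
  finally show ?thesis .
qed

theorem proposition8p8:
  fixes scA :: "complex \<Rightarrow> 'a::ring \<Rightarrow> 'a"
    and scB :: "complex \<Rightarrow> 'b::ring_1 \<Rightarrow> 'b"
    and scM :: "complex \<Rightarrow> 'm::ab_group_add \<Rightarrow> 'm"
    and act :: "'a \<Rightarrow> 'm \<Rightarrow> 'm"
    and ract :: "'m \<Rightarrow> 'b \<Rightarrow> 'm"
    and p :: 'b
    and \<psi> :: "'a \<Rightarrow> complex"
  assumes "AUF scA"
    and "alg scB"
    and "bimod scA scB scM act ract"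
    and "coherent scA scM act UNIV"
    and "lproj scA UNIV (+) 0 scM act TYPE('m \<Rightarrow> 'a)"
    and "p * p = p"
    and "\<psi> \<in> SLF scA"
  shows "\<forall>y \<in> {p * b * p | b. True}.
           rptrace scA scM act ract {ract \<xi> p | \<xi>. True} \<psi> y = rptrace scA scM act ract UNIV \<psi> y"
proof
  note auf = assms(1) and bm = assms(3) and coh = assms(4) and proj = assms(5) and pp = assms(6)
    and psi = assms(7)
  fix y assume "y \<in> {p * b * p | b. True}"
  then obtain b where yb: "y = p * b * p" by blast
  have py: "p * y = y" using yb pp by (metis mult.assoc)
  have yp: "y * p = y" using yb pp by (metis mult.assoc)
  from bm have r2: "\<And>x b b'. ract x (b * b') = ract (ract x b) b'"
    and r3: "\<And>x y b. ract (x + y) b = ract x b + ract y b"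
    and r5: "\<And>c x b. ract (scM c x) b = scM c (ract x b)"
    and r6: "\<And>a x b. act a (ract x b) = ract (act a x) b"
    unfolding bimod_def by simp_all
  have r0: "\<And>b. ract 0 b = 0" using r3[of 0 0] by simp
  obtain e \<beta> \<beta>c where c: "rcoord scA scM act UNIV e \<beta> \<beta>c" using exists_coord[OF auf coh proj] by blast
  from c have ee: "e * e = e" and lb: "length \<beta> = length \<beta>c"
    and hb: "\<forall>j<length \<beta>. lhom {a * e | a. True} (+) scA (*) UNIV (+) scM act (\<beta>!j)"
    and hbc: "\<forall>j<length \<beta>. lhom UNIV (+) scM act {a * e | a. True} (+) scA (*) (\<beta>c!j)"
    and idb: "\<forall>\<xi>. (\<Sum>j<length \<beta>. (\<beta>!j) ((\<beta>c!j) \<xi>)) = \<xi>"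
    unfolding rcoord_def by auto
  define N where "N = {ract \<xi> p | \<xi>. True}"
  define \<beta>' where "\<beta>' = map (\<lambda>f a. ract (f a) p) \<beta>"
  have N0: "0 \<in> N"
  proof -
    have "0 = ract 0 p" using r0 by simp
    then show ?thesis unfolding N_def by blast
  qed
  have Nadd: "\<forall>x\<in>N. \<forall>y\<in>N. x + y \<in> N"
  proof (intro ballI)
    fix x z assume "x \<in> N" "z \<in> N"
    then obtain u v where "x = ract u p" "z = ract v p" unfolding N_def by blast
    then have "x + z = ract (u + v) p" by (simp add: r3)
    then show "x + z \<in> N" unfolding N_def by blast
  qed
  have Nfix: "\<And>\<xi>. \<xi> \<in> N \<Longrightarrow> ract \<xi> p = \<xi>"
  proof -
    fix \<xi> assume "\<xi> \<in> N"
    then obtain u where u: "\<xi> = ract u p" unfolding N_def by blast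
    have "ract (ract u p) p = ract u (p * p)" by (rule r2[symmetric])
    then show "ract \<xi> p = \<xi>" using u pp by simp
  qed
  have c': "rcoord scA scM act N e \<beta>' \<beta>c"
    unfolding rcoord_def
  proof (intro conjI allI impI ballI)
    show "e * e = e" by (rule ee)
    show "length \<beta>' = length \<beta>c" using lb unfolding \<beta>'_def by simp
  next
    fix j assume "j < length \<beta>'"
    then have j: "j < length \<beta>" unfolding \<beta>'_def by simp
    have h1: "\<forall>x\<in>{a * e | a. True}. \<forall>y\<in>{a * e | a. True}. (\<beta>!j) (x + y) = (\<beta>!j) x + (\<beta>!j) y"
      "\<forall>c. \<forall>x\<in>{a * e | a. True}. (\<beta>!j) (scA c x) = scM c ((\<beta>!j) x)"
      "\<forall>a. \<forall>x\<in>{a * e | a. True}. (\<beta>!j) (a * x) = act a ((\<beta>!j) x)"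
      using hb j unfolding lhom_def by blast+
    have bj: "\<beta>' ! j = (\<lambda>a. ract ((\<beta>!j) a) p)" unfolding \<beta>'_def using j by simp
    have im: "(\<lambda>a. ract ((\<beta>!j) a) p) ` {a * e | a. True} \<subseteq> N" unfolding N_def by blast
    show "lhom {a * e | a. True} (+) scA (*) N (+) scM act (\<beta>' ! j)"
      unfolding lhom_def bj using im h1 by (simp add: r3 r5 r6)
    have h2: "\<forall>x\<in>UNIV. \<forall>y\<in>UNIV. (\<beta>c!j) (x + y) = (\<beta>c!j) x + (\<beta>c!j) y"
      "\<forall>c. \<forall>x\<in>UNIV. (\<beta>c!j) (scM c x) = scA c ((\<beta>c!j) x)"
      "\<forall>a. \<forall>x\<in>UNIV. (\<beta>c!j) (act a x) = a * ((\<beta>c!j) x)"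
      "(\<beta>c!j) ` UNIV \<subseteq> {a * e | a. True}"
      using hbc j unfolding lhom_def by blast+
    show "lhom N (+) scM act {a * e | a. True} (+) scA (*) (\<beta>c ! j)"
      unfolding lhom_def using h2 by blast
  next
    fix \<xi> assume xi: "\<xi> \<in> N"
    have "(\<Sum>j<length \<beta>'. (\<beta>' ! j) ((\<beta>c ! j) \<xi>)) = (\<Sum>j<length \<beta>. ract ((\<beta> ! j) ((\<beta>c ! j) \<xi>)) p)"
      unfolding \<beta>'_def by simp
    also have "\<dots> = ract (\<Sum>j<length \<beta>. (\<beta> ! j) ((\<beta>c ! j) \<xi>)) p"
      by (rule sum_hom[of UNIV, symmetric]) (simp_all add: r3)
    also have "\<dots> = \<xi>" using idb Nfix[OF xi] by simp
    finally show "(\<Sum>j<length \<beta>'. (\<beta>' ! j) ((\<beta>c ! j) \<xi>)) = \<xi>" .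
  qed
  have RN: "\<forall>\<xi>\<in>N. ract \<xi> y \<in> N"
  proof
    fix \<xi> assume "\<xi> \<in> N"
    have "ract \<xi> y = ract (ract \<xi> y) p" using r2[of \<xi> y p] yp by simp
    then show "ract \<xi> y \<in> N" unfolding N_def by blast
  qed
  have "rptrace scA scM act ract N \<psi> y = (\<Sum>j<length \<beta>'. \<psi> ((\<beta>c!j) (ract ((\<beta>'!j) e) y)))"
    by (rule rptrace_eq[where ract=ract and y=y, OF c' psi N0 Nadd RN]) (simp_all add: r3 r6)
  also have "\<dots> = (\<Sum>j<length \<beta>. \<psi> ((\<beta>c!j) (ract ((\<beta>!j) e) y)))"
    unfolding \<beta>'_def by (simp add: r2[symmetric] py)
  also have "\<dots> = rptrace scA scM act ract UNIV \<psi> y"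
    by (rule rptrace_eq[where ract=ract and y=y and N=UNIV, OF c psi, symmetric]) (simp_all add: r3 r6)
  finally show "rptrace scA scM act ract {ract \<xi> p | \<xi>. True} \<psi> y = rptrace scA scM act ract UNIV \<psi> y"
    unfolding N_def .
qed

end
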